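(* For every integer $j\geq 3$, the function $l\mapsto \mathbf{g}_1(j,l)$ is strictly increasing on the integers $2\leq l\leq \lfloor (j+1)/2\rfloor$.
   Context: For $\varphi\in\mathbb{R}\setminus2\pi\mathbb{Z}$ let $\mathbf{f}(\varphi)=\frac{1}{8|\sin(\varphi/2)|}\left(\frac{2}{\sin^2(\varphi/2)}-1\right)+\cos\varphi$. For integers $j\geq1$, $l\geq1$ define $\mathbf{g}_1(j,l)=\sum_{k=1}^{j-1}\mathbf{f}\!\left(\frac{2k\pi}{j}\right)\left(1-\cos\frac{2(l-1)k\pi}{j}\right)$. $\lfloor x\rfloor$ is the largest integer not exceeding $x$. *)

theory Defs
  imports Complex_Main
begin

definition bff :: "real \<Rightarrow> real" where
  "bff \<phi> = 1 / (8 * \<bar>sin (\<phi> / 2)\<bar>) * (2 / (sin (\<phi> / 2))^2 - 1) + cos \<phi>"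

definition g1 :: "nat \<Rightarrow> nat \<Rightarrow> real" where
  "g1 j l = (\<Sum>k=1..j-1. bff (2 * real k * pi / real j)
              * (1 - cos (2 * (real l - 1) * real k * pi / real j)))"

end

theory Submission
  imports Defs
begin

lemma sin_sum_odd:
  fixes j p :: nat
  assumes j: "j \<ge> 1" and p: "odd p" "p < 2*j"
  shows "(\<Sum>k=1..j-1. sin (real p * (real k * pi / real j)))
         = cos (real p * pi / (2*real j)) / sin (real p * pi / (2*real j))"
proof -
  define a where "a = real p * pi / (2*real j)"
  have jpos: "real j > 0" using j by simp
  have p0: "p > 0" using p by (cases p) auto
  have a0: "a > 0" unfolding a_def using p0 jpos by simp
  have api: "a < pi" unfolding a_def using p jpos by (simp add: field_simps)
  have sa: "sin a > 0" using a0 api sin_gt_zero by blast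
  define F where "F k = cos ((2*real k - 1)*a)" for k :: nat
  have key: "2 * sin a * sin (real p * (real k * pi / real j)) = F k - F (Suc k)" for k
  proof -
    have e: "real p * (real k * pi / real j) = 2*real k*a" unfolding a_def using jpos by (simp add: field_simps)
    have "F k = cos (2*real k*a - a)" unfolding F_def by (simp add: algebra_simps)
    moreover have "F (Suc k) = cos (2*real k*a + a)" unfolding F_def by (simp add: algebra_simps)
    ultimately show ?thesis unfolding e by (simp add: cos_diff cos_add)
  qed
  have "2 * sin a * (\<Sum>k=1..j-1. sin (real p * (real k * pi / real j))) = (\<Sum>k=1..j-1. F k - F (Suc k))"
    unfolding sum_distrib_left by (rule sum.cong, rule refl, rule key)
  also have "\<dots> = - (\<Sum>k=1..j-1. F (Suc k) - F k)" by (simp add: sum_negf[symmetric])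
  also have "\<dots> = F 1 - F j" using sum_Suc_diff[of 1 "j-1" F] j by simp
  also have "F j = - cos a"
  proof -
    have "(2*real j - 1)*a = real p * pi - a" unfolding a_def using jpos by (simp add: field_simps)
    hence "F j = cos (real p * pi - a)" unfolding F_def by simp
    also have "\<dots> = - cos a" using p by (simp add: cos_diff)
    finally show ?thesis .
  qed
  also have "F 1 = cos a" unfolding F_def by simp
  finally have "2 * sin a * (\<Sum>k=1..j-1. sin (real p * (real k * pi / real j))) = 2 * cos a" by simp
  thus ?thesis using sa unfolding a_def[symmetric] by (simp add: field_simps)
qed

lemma cos_sum:
  fixes j q :: nat
  assumes q: "0 < q" "q < j"
  shows "(\<Sum>k=1..j-1. cos (2 * real q * (real k * pi / real j))) = -1"
proof -
  define a where "a = real q * pi / real j"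
  have jpos: "real j > 0" using q by simp
  have a0: "a > 0" unfolding a_def using q jpos by simp
  have api: "a < pi" unfolding a_def using q jpos by (simp add: field_simps)
  have sa: "sin a > 0" using a0 api sin_gt_zero by blast
  define G where "G k = sin ((2*real k - 1)*a)" for k :: nat
  have key: "2 * sin a * cos (2 * real q * (real k * pi / real j)) = G (Suc k) - G k" for k
  proof -
    have e: "2 * real q * (real k * pi / real j) = 2*real k*a" unfolding a_def using jpos by (simp add: field_simps)
    have "G k = sin (2*real k*a - a)" unfolding G_def by (simp add: algebra_simps)
    moreover have "G (Suc k) = sin (2*real k*a + a)" unfolding G_def by (simp add: algebra_simps)
    ultimately show ?thesis unfolding e by (simp add: sin_diff sin_add)
  qed
  have "2 * sin a * (\<Sum>k=1..j-1. cos (2 * real q * (real k * pi / real j))) = (\<Sum>k=1..j-1. G (Suc k) - G k)"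
    unfolding sum_distrib_left by (rule sum.cong, rule refl, rule key)
  also have "\<dots> = G j - G 1" using sum_Suc_diff[of 1 "j-1" G] q by simp
  also have "G j = - sin a"
  proof -
    have "(2*real j - 1)*a = real (2*q) * pi - a" unfolding a_def using jpos by (simp add: field_simps)
    hence "G j = sin (real (2*q) * pi - a)" unfolding G_def by simp
    also have "\<dots> = - sin a" by (simp add: sin_diff)
    finally show ?thesis .
  qed
  also have "G 1 = sin a" unfolding G_def by simp
  finally have "2 * sin a * (\<Sum>k=1..j-1. cos (2 * real q * (real k * pi / real j))) = 2 * (-1) * sin a" by simp
  hence "sin a * ((\<Sum>k=1..j-1. cos (2 * real q * (real k * pi / real j))) + 1) = 0"
    by (simp add: algebra_simps)
  thus ?thesis using sa by simp
qed

lemma cos_sum_ge: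
  fixes j q :: nat
  assumes q: "q < j"
  shows "(\<Sum>k=1..j-1. cos (2 * real q * (real k * pi / real j))) \<ge> -1"
proof (cases "q = 0")
  case True thus ?thesis by simp
next
  case False thus ?thesis using cos_sum[of q j] q by simp
qed


definition tt :: "nat \<Rightarrow> nat \<Rightarrow> real" where
  "tt j p = cos (real p * pi / (2*real j)) / sin (real p * pi / (2*real j))"

definition AA :: "nat \<Rightarrow> nat \<Rightarrow> real" where
  "AA j n = (\<Sum>k=1..j-1. sin (real n * (real k * pi / real j)) / (sin (real k * pi / real j))^2)"

lemma ang_props:
  fixes j p :: nat
  assumes "1 \<le> p" "p \<le> j"
  shows "sin (real p * pi / (2*real j)) > 0" "cos (real p * pi / (2*real j)) \<ge> 0"
        "real p * pi / (2*real j) > 0" "real p * pi / (2*real j) \<le> pi/2"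
proof -
  have jpos: "real j > 0" using assms by simp
  show a0: "real p * pi / (2*real j) > 0" using assms jpos by simp
  show a1: "real p * pi / (2*real j) \<le> pi/2" using assms jpos by (simp add: field_simps)
  have a2: "real p * pi / (2*real j) < pi" using a1 pi_gt_zero by linarith
  show "sin (real p * pi / (2*real j)) > 0" using a0 a2 by (rule sin_gt_zero)
  show "cos (real p * pi / (2*real j)) \<ge> 0" using a0 a1 by (intro cos_ge_zero) auto
qed

lemma tt_nonneg:
  assumes "1 \<le> p" "p \<le> j"
  shows "tt j p \<ge> 0"
  using ang_props[OF assms] unfolding tt_def by simp

lemma tt_mono:
  assumes "1 \<le> p" "p \<le> q" "q \<le> j"
  shows "tt j q \<le> tt j p"
proof -
  define bp where "bp = real p * pi / (2*real j)"
  define bq where "bq = real q * pi / (2*real j)"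
  have sp: "sin bp > 0" and sq: "sin bq > 0" using ang_props[of p j] ang_props[of q j] assms
    unfolding bp_def bq_def by auto
  have "bp \<le> bq" unfolding bp_def bq_def using assms by (simp add: divide_right_mono mult_right_mono)
  moreover have "bq \<le> pi/2" "bp > 0" using ang_props[of p j] ang_props[of q j] assms
    unfolding bp_def bq_def by auto
  ultimately have "sin (bq - bp) \<ge> 0" by (intro sin_ge_zero) auto
  hence "cos bq * sin bp \<le> cos bp * sin bq" by (simp add: sin_diff algebra_simps)
  hence "cos bq / sin bq \<le> cos bp / sin bp" using sp sq by (simp add: divide_simps mult.commute)
  thus ?thesis unfolding tt_def bp_def[symmetric] bq_def[symmetric] .
qed

lemma cot_convex_aux:
  fixes c h :: real
  assumes "0 < c - h" "c + h \<le> pi/2" "0 < h"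
  shows "cos (c-h)/sin (c-h) + cos (c+h)/sin(c+h) \<ge> 2 * (cos c / sin c)"
proof -
  have s1: "sin (c-h) > 0" using assms by (intro sin_gt_zero) auto
  have s2: "sin (c+h) > 0" using assms by (intro sin_gt_zero) auto
  have sc: "sin c > 0" using assms by (intro sin_gt_zero) auto
  have cc: "cos c \<ge> 0" using assms by (intro cos_ge_zero) auto
  define S where "S = sin c"
  define C where "C = cos c"
  define s where "s = sin h"
  define k where "k = cos h"
  have pyth: "k^2 = 1 - s^2" unfolding k_def s_def by (simp add: cos_squared_eq)
  have e1: "sin (c-h) = S*k - C*s" "cos (c-h) = C*k + S*s"
    unfolding S_def C_def s_def k_def by (simp_all add: sin_diff cos_diff)
  have e2: "sin (c+h) = S*k + C*s" "cos (c+h) = C*k - S*s"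
    unfolding S_def C_def s_def k_def by (simp_all add: sin_add cos_add)
  have p1: "S*k - C*s > 0" using s1 e1 by simp
  have p2: "S*k + C*s > 0" using s2 e2 by simp
  have SP: "S > 0" using sc S_def by simp
  have CP: "C \<ge> 0" using cc C_def by simp
  have sum: "(C*k + S*s)/(S*k - C*s) + (C*k - S*s)/(S*k + C*s) = 2*C*S*(k^2+s^2)/((S*k - C*s)*(S*k + C*s))"
    using p1 p2 by (simp add: divide_simps) (simp add: algebra_simps power2_eq_square)
  have pyth2: "C^2 = 1 - S^2" unfolding C_def S_def by (simp add: cos_squared_eq)
  have D: "(S*k - C*s)*(S*k + C*s) = S^2 - s^2"
  proof -
    have "(S*k - C*s)*(S*k + C*s) = S^2*k^2 - C^2*s^2" by (simp add: algebra_simps power2_eq_square)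
    also have "\<dots> = S^2 - s^2" unfolding pyth pyth2 by (simp add: algebra_simps)
    finally show ?thesis .
  qed
  have ks: "k^2 + s^2 = 1" using pyth by simp
  have Dpos: "S^2 - s^2 > 0" using D p1 p2 by (metis mult_pos_pos)
  have "2*C*S/(S^2 - s^2) \<ge> 2*C/S"
  proof -
    have "2*C*S*S \<ge> 2*C*(S^2 - s^2)" using CP by (simp add: power2_eq_square mult_left_mono algebra_simps)
    thus ?thesis using Dpos SP by (simp add: divide_simps mult.commute mult.left_commute)
  qed
  thus ?thesis using sum unfolding e1 e2 D ks S_def[symmetric] C_def[symmetric] by simp
qed


lemma tt_convex:
  assumes "1 \<le> n" "n + 4 \<le> j"
  shows "tt j n + tt j (n+4) \<ge> 2 * tt j (n+2)"
proof -
  have jpos: "real j > 0" using assms by simp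
  define c where "c = real (n+2) * pi / (2*real j)"
  define h where "h = pi / real j"
  have e1: "c - h = real n * pi / (2*real j)" unfolding c_def h_def using jpos by (simp add: field_simps)
  have e2: "c + h = real (n+4) * pi / (2*real j)" unfolding c_def h_def using jpos by (simp add: field_simps)
  have "0 < c - h" unfolding e1 using assms jpos by simp
  moreover have "c + h \<le> pi/2" unfolding e2 using ang_props(4)[of "n+4" j] assms by simp
  moreover have "0 < h" unfolding h_def using jpos by simp
  ultimately have "cos (c-h)/sin (c-h) + cos (c+h)/sin(c+h) \<ge> 2 * (cos c / sin c)"
    by (rule cot_convex_aux)
  moreover have "tt j n = cos (c-h)/sin (c-h)" "tt j (n+4) = cos (c+h)/sin (c+h)"
    "tt j (n+2) = cos c / sin c" unfolding tt_def e1 e2 by (simp_all add: c_def)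
  ultimately show ?thesis by simp
qed

lemma AA_second:
  assumes "odd n" "n + 2 < 2*j"
  shows "AA j (n+4) - 2 * AA j (n+2) + AA j n = -4 * tt j (n+2)"
proof -
  have j1: "j \<ge> 1" using assms by simp
  have pt: "sin (real (n+4) * x) / (sin x)^2 - 2 * (sin (real (n+2) * x) / (sin x)^2)
           + sin (real n * x) / (sin x)^2 = -4 * sin (real (n+2) * x)" if sx: "sin x \<noteq> 0" for x
  proof -
    define u where "u = real (n+2) * x"
    have a: "real (n+4) * x = u + 2*x" unfolding u_def by (simp add: algebra_simps)
    have b: "real n * x = u - 2*x" unfolding u_def by (simp add: algebra_simps)
    have "sin (u+2*x) + sin (u-2*x) = 2 * sin u * cos (2*x)"
      by (simp add: sin_add sin_diff)
    also have "cos (2*x) = 1 - 2 * (sin x)^2" by (rule cos_double_sin)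
    finally have "sin (u+2*x) + sin (u-2*x) - 2 * sin u = -4 * sin u * (sin x)^2"
      by (simp add: algebra_simps)
    thus ?thesis unfolding a b u_def[symmetric] using sx by (simp add: divide_simps)
  qed
  have "AA j (n+4) - 2 * AA j (n+2) + AA j n = (\<Sum>k=1..j-1. -4 * sin (real (n+2) * (real k * pi / real j)))"
    unfolding AA_def sum_subtractf[symmetric] sum.distrib[symmetric] sum_distrib_left
  proof (rule sum.cong[OF refl])
    fix k assume k: "k \<in> {1..j-1}"
    have "sin (real k * pi / real j) \<noteq> 0"
    proof -
      have "0 < real k * pi / real j" using k by auto
      moreover have kj: "k < j" using k j1 by auto
      moreover have "real k * pi / real j < pi" using kj by (simp add: field_simps)
      ultimately show ?thesis using sin_gt_zero by force
    qed
    from pt[OF this] show "sin (real (n + 4) * (real k * pi / real j)) / (sin (real k * pi / real j))\<^sup>2 -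
         2 * (sin (real (n + 2) * (real k * pi / real j)) / (sin (real k * pi / real j))\<^sup>2) +
         sin (real n * (real k * pi / real j)) / (sin (real k * pi / real j))\<^sup>2 =
         - 4 * sin (real (n + 2) * (real k * pi / real j))" by simp
  qed
  also have "\<dots> = -4 * tt j (n+2)"
    unfolding sum_distrib_left[symmetric] tt_def using sin_sum_odd[of j "n+2"] assms j1 by simp
  finally show ?thesis .
qed


lemma sin_k_pos:
  assumes "k \<in> {1..j-1}"
  shows "sin (real k * pi / real j) > 0"
proof -
  have kj: "k < j" "k \<ge> 1" using assms by auto
  have "0 < real k * pi / real j" using kj by auto
  moreover have "real k * pi / real j < pi" using kj by (simp add: field_simps)
  ultimately show ?thesis using sin_gt_zero by force
qed

lemma Phi_1:
  assumes j: "j \<ge> 5"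
  shows "2 * AA j 3 - tt j 3 > 0"
proof -
  define s where "s k = sin (real k * pi / real j)" for k
  have jpos: "real j > 0" using j by simp
  have A3: "AA j 3 = 3 * (\<Sum>k=1..j-1. 1 / s k) - 4 * (\<Sum>k=1..j-1. s k)"
    unfolding AA_def sum_distrib_left sum_subtractf[symmetric]
  proof (rule sum.cong[OF refl])
    fix k assume k: "k \<in> {1..j-1}"
    have sp: "s k > 0" using sin_k_pos[OF k] s_def by simp
    define x where "x = real k * pi / real j"
    have "sin (3 * x) = sin (2*x + x)" by simp
    also have "\<dots> = sin (2*x) * cos x + cos (2*x) * sin x" by (rule sin_add)
    also have "\<dots> = 2*sin x*(cos x)^2 + (1 - 2*(sin x)^2)*sin x"
      by (simp only: sin_double cos_double_sin) (simp add: power2_eq_square)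
    also have "\<dots> = 3 * sin x - 4 * (sin x)^3"
      unfolding cos_squared_eq by (simp add: algebra_simps power2_eq_square power3_eq_cube)
    finally have "sin (3*x) = 3 * s k - 4 * (s k)^3" unfolding s_def x_def .
    thus "sin (real 3 * (real k * pi / real j)) / (sin (real k * pi / real j))\<^sup>2 = 3 * (1 / s k) - 4 * s k"
      using sp unfolding x_def s_def[symmetric] by (simp add: divide_simps power2_eq_square power3_eq_cube) (simp add: algebra_simps)
  qed
  have sum_s: "(\<Sum>k=1..j-1. s k) = tt j 1"
    using sin_sum_odd[of j 1] j unfolding tt_def s_def by simp
  define b where "b = pi / real j"
  have b0: "b > 0" unfolding b_def using jpos by simp
  have b5: "b \<le> pi / 5" unfolding b_def using j jpos by (simp add: field_simps)
  have sb: "sin b > 0" using b0 b5 by (intro sin_gt_zero) auto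
  have cb: "cos b > 0" using b0 b5 by (intro cos_gt_zero) auto
  have cb1: "cos b \<le> 1" by simp
  have r1: "real (j-1) * pi / real j = pi - b" unfolding b_def using jpos j by (simp add: of_nat_diff field_simps)
  have r2: "real (j-2) * pi / real j = pi - 2*b" unfolding b_def using jpos j by (simp add: of_nat_diff field_simps)
  have s1: "s 1 = sin b" "s (j-1) = sin b" unfolding s_def r1 by (simp_all add: b_def)
  have s2: "s 2 = 2 * sin b * cos b" "s (j-2) = 2 * sin b * cos b" unfolding s_def r2
    by (simp_all add: b_def sin_double[symmetric])
  have "(\<Sum>k\<in>{1,2,j-2,j-1}. 1 / s k) \<le> (\<Sum>k=1..j-1. 1 / s k)"
  proof (rule sum_mono2)
    show "{1, 2, j - 2, j - 1} \<subseteq> {1..j - 1}" using j by auto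
    show "\<And>b. b \<in> {1..j - 1} - {1, 2, j - 2, j - 1} \<Longrightarrow> 0 \<le> 1 / s b"
      using sin_k_pos s_def by (simp add: less_imp_le)
  qed simp
  moreover have "(\<Sum>k\<in>{1,2,j-2,j-1}. 1 / s k) = 2 / sin b + 2 / (2 * sin b * cos b)"
  proof -
    have d: "j - 2 \<noteq> j - 1" "j - 2 \<noteq> 1" "j - 2 \<noteq> 2" "j - 1 \<noteq> 1" "j - 1 \<noteq> 2" using j by auto
    have "(\<Sum>k\<in>{1,2,j-2,j-1}. 1 / s k) = 1 / s 1 + 1 / s 2 + 1 / s (j-2) + 1 / s (j-1)"
      using d by (simp add: algebra_simps)
    thus ?thesis using s1 s2 by simp
  qed
  ultimately have S: "(\<Sum>k=1..j-1. 1 / s k) \<ge> 2 / sin b + 1 / (sin b * cos b)" by simp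
  have t1: "tt j 1 = (1 + cos b) / sin b"
  proof -
    define a where "a = pi / (2 * real j)"
    have ab: "b = 2 * a" unfolding a_def b_def by simp
    have "sin a > 0" using ang_props[of 1 j] j unfolding a_def by simp
    moreover have "cos a > 0" using ab b0 b5 by (intro cos_gt_zero) auto
    moreover have "tt j 1 = cos a / sin a" unfolding tt_def a_def by simp
    ultimately show ?thesis unfolding ab
      by (simp add: sin_double cos_double_cos divide_simps power2_eq_square)
  qed
  have t3: "tt j 3 \<le> cos b / sin b"
    using tt_mono[of 2 3 j] j unfolding tt_def b_def by simp
  have key: "6 + 4 * cos b - 9 * (cos b)^2 > 0"
  proof -
    have "(cos b)^2 \<le> cos b" using cb cb1 by (simp add: power2_eq_square mult_left_le)
    thus ?thesis using cb1 by linarith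
  qed
  have "2 * (3 * (2 / sin b + 1 / (sin b * cos b)) - 4 * ((1 + cos b) / sin b)) - cos b / sin b
        = (6 + 4 * cos b - 9 * (cos b)^2) / (sin b * cos b)"
    using sb cb by (simp add: divide_simps) (simp add: algebra_simps power2_eq_square)
  also have "\<dots> > 0" using key sb cb by simp
  finally have "2 * (3 * (2 / sin b + 1 / (sin b * cos b)) - 4 * ((1 + cos b) / sin b)) - cos b / sin b > 0" .
  thus ?thesis unfolding A3 sum_s t1 using S t3 by argo
qed


definition sg :: "nat \<Rightarrow> real" where "sg k = (if even k then -1 else 1)"

lemma alt_sum:
  assumes "2*r+1 \<le> j"
  shows "(\<Sum>k=1..2*r+1. sg k * tt j k) \<ge> tt j (2*r+1)"
  using assms
proof (induction r)
  case 0 thus ?case by (simp add: sg_def)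
next
  case (Suc r)
  define n where "n = 2*r+1"
  have IH: "(\<Sum>k=1..n. sg k * tt j k) \<ge> tt j n" using Suc unfolding n_def by simp
  have e: "2*Suc r+1 = Suc (Suc n)" by (simp add: n_def)
  have sp: "(\<Sum>k=1..Suc (Suc n). sg k * tt j k) = (\<Sum>k=1..n. sg k * tt j k) + sg (Suc n) * tt j (Suc n) + sg (Suc (Suc n)) * tt j (Suc (Suc n))"
    by (simp add: n_def)
  have "sg (Suc n) = -1" "sg (Suc (Suc n)) = 1" unfolding sg_def n_def by simp_all
  moreover have "tt j (Suc n) \<le> tt j n" using tt_mono[of n "Suc n" j] Suc.prems unfolding n_def by simp
  ultimately show ?case unfolding e using IH sp by simp
qed

lemma cot_alt_zero:
  assumes "even j"
  shows "(\<Sum>k=1..j-1. sg k * (cos (real k * pi / real j) / sin (real k * pi / real j))) = 0"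
proof -
  define g where "g k = sg k * (cos (real k * pi / real j) / sin (real k * pi / real j))" for k
  have "(\<Sum>k=1..j-1. g k) = (\<Sum>k=1..j-1. g (j - 1 + 1 - k))"
    by (rule sum.atLeastAtMost_rev)
  also have "\<dots> = (\<Sum>k=1..j-1. - g k)"
  proof (rule sum.cong[OF refl])
    fix k assume k: "k \<in> {1..j-1}"
    have kj: "k < j" using k by auto
    have e: "j - 1 + 1 - k = j - k" using kj by simp
    have r: "real (j-k) * pi / real j = pi - real k * pi / real j" using kj by (simp add: of_nat_diff field_simps)
    have s: "sg (j-k) = sg k" unfolding sg_def using assms kj by auto
    show "g (j - 1 + 1 - k) = - g k" unfolding e g_def r s by simp
  qed
  finally have "(\<Sum>k=1..j-1. g k) = - (\<Sum>k=1..j-1. g k)" by (simp add: sum_negf)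
  thus ?thesis unfolding g_def by simp
qed

lemma Phi_top:
  assumes j: "j \<ge> 3"
  shows "2 * AA j (2*((j-1) div 2)+1) - tt j (2*((j-1) div 2)+1) \<ge> 0"
proof (cases "even j")
  case False
  hence e: "2*((j-1) div 2)+1 = j" by presburger
  have "AA j j = 0" unfolding AA_def using j by simp
  moreover have "tt j j = 0" unfolding tt_def using j by simp
  ultimately show ?thesis unfolding e by simp
next
  case True
  hence e: "2*((j-1) div 2)+1 = j-1" using j by presburger
  have jpos: "real j > 0" using j by simp
  have "AA j (j-1) = (\<Sum>k=1..j-1. sg k * tt j k - sg k * (cos (real k * pi / real j) / sin (real k * pi / real j)))"
    unfolding AA_def
  proof (rule sum.cong[OF refl])
    fix k assume k: "k \<in> {1..j-1}"
    have kj: "k < j" using k by auto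
    define x where "x = real k * pi / real j"
    define a where "a = real k * pi / (2 * real j)"
    have xa: "x = 2 * a" unfolding x_def a_def by simp
    have sx: "sin x > 0" using sin_k_pos[OF k] x_def by simp
    have sa: "sin a > 0" using ang_props[of k j] k unfolding a_def by auto
    have r: "real (j-1) * x = real k * pi - x" unfolding x_def using kj jpos by (simp add: of_nat_diff field_simps)
    have "sin (real (j-1) * x) = - ((-1)^k) * sin x" unfolding r by (simp add: sin_diff)
    also have "- ((-1)^k) = sg k" unfolding sg_def by simp
    finally have num: "sin (real (j-1) * x) = sg k * sin x" .
    have inv: "1 / sin x = cos a / sin a - cos x / sin x" unfolding xa using sa
      by (simp add: sin_double cos_double_cos divide_simps power2_eq_square)
    have "sin (real (j-1) * x) / (sin x)^2 = sg k * (1 / sin x)"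
      unfolding num using sx by (simp add: power2_eq_square)
    also have "\<dots> = sg k * (cos a / sin a) - sg k * (cos x / sin x)"
      unfolding inv by (simp add: right_diff_distrib)
    finally have "sin (real (j-1) * x) / (sin x)^2 = sg k * (cos a / sin a) - sg k * (cos x / sin x)" .
    moreover have "tt j k = cos a / sin a" unfolding tt_def a_def by simp
    ultimately show "sin (real (j - 1) * (real k * pi / real j)) / (sin (real k * pi / real j))\<^sup>2 =
         sg k * tt j k - sg k * (cos (real k * pi / real j) / sin (real k * pi / real j))"
      unfolding x_def by simp
  qed
  also have "\<dots> = (\<Sum>k=1..j-1. sg k * tt j k)"
    unfolding sum_subtractf cot_alt_zero[OF True] by simp
  finally have A: "AA j (j-1) = (\<Sum>k=1..j-1. sg k * tt j k)" .
  have "(\<Sum>k=1..2*((j-1) div 2)+1. sg k * tt j k) \<ge> tt j (2*((j-1) div 2)+1)"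
    by (rule alt_sum) (use j in presburger)
  hence "AA j (j-1) \<ge> tt j (j-1)" unfolding A e .
  moreover have "tt j (j-1) \<ge> 0" using tt_nonneg[of "j-1" j] j by simp
  ultimately show ?thesis unfolding e by simp
qed


lemma concave_pos:
  fixes F :: "nat \<Rightarrow> real"
  assumes cc: "\<And>r. 1 \<le> r \<Longrightarrow> r+2 \<le> T \<Longrightarrow> F (r+2) - F (r+1) \<le> F (r+1) - F r"
    and F1: "F 1 > 0" and FT: "F T \<ge> 0" and m: "1 \<le> m" "m < T"
  shows "F m > 0"
proof -
  define d where "d r = F (Suc r) - F r" for r
  have dm: "d r' \<le> d r" if "1 \<le> r" "r \<le> r'" "r' \<le> T - 1" for r r'
    using that(2,3)
  proof (induction r' rule: dec_induct)
    case base thus ?case by simp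
  next
    case (step q)
    have "d (Suc q) \<le> d q" unfolding d_def using cc[of q] step that(1) by simp
    thus ?case using step by simp
  qed
  show ?thesis
  proof (cases "m = 1")
    case True thus ?thesis using F1 by simp
  next
    case False
    hence m2: "m \<ge> 2" using m by simp
    show ?thesis
    proof (cases "d (m-1) \<ge> 0")
      case True
      have "(\<Sum>i=1..m-1. d i) \<ge> 0"
      proof (rule sum_nonneg)
        fix i assume i: "i \<in> {1..m-1}"
        have "d (m-1) \<le> d i" using dm[of i "m-1"] i m by auto
        thus "0 \<le> d i" using True by simp
      qed
      moreover have "(\<Sum>i=1..m-1. d i) = F m - F 1" unfolding d_def using sum_Suc_diff[of 1 "m-1" F] m2 by simp
      ultimately show ?thesis using F1 by simp
    next
      case False
      have "(\<Sum>i=m..T-1. d i) \<le> (\<Sum>i=m..T-1. d (m-1))"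
      proof (rule sum_mono)
        fix i assume i: "i \<in> {m..T-1}"
        show "d i \<le> d (m-1)" using dm[of "m-1" i] i m2 by auto
      qed
      also have "\<dots> = real (T - m) * d (m-1)" using m by simp
      also have "\<dots> < 0" using False m by (simp add: mult_pos_neg)
      finally have "(\<Sum>i=m..T-1. d i) < 0" .
      moreover have "(\<Sum>i=m..T-1. d i) = F T - F m" unfolding d_def using sum_Suc_diff[of m "T-1" F] m by simp
      ultimately show ?thesis using FT by simp
    qed
  qed
qed

definition Phi :: "nat \<Rightarrow> nat \<Rightarrow> real" where
  "Phi j r = 2 * AA j (2*r+1) - tt j (2*r+1)"

lemma Phi_pos:
  assumes j: "j \<ge> 5" and m: "1 \<le> m" "2*m+1 < 2*((j-1) div 2)+1"
  shows "Phi j m > 0"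
proof (rule concave_pos[where T="(j-1) div 2"])
  fix r assume r: "1 \<le> r" "r + 2 \<le> (j-1) div 2"
  define n where "n = 2*r+1"
  have n4: "n + 4 \<le> j" using r unfolding n_def by linarith
  have sec: "AA j (n+4) - 2 * AA j (n+2) + AA j n = -4 * tt j (n+2)"
    by (rule AA_second) (use n4 in \<open>auto simp: n_def\<close>)
  have cv: "tt j n + tt j (n+4) \<ge> 2 * tt j (n+2)" by (rule tt_convex) (use n4 in \<open>auto simp: n_def\<close>)
  have nn: "tt j (n+2) \<ge> 0" by (rule tt_nonneg) (use n4 in \<open>auto simp: n_def\<close>)
  have e: "2*(r+2)+1 = n+4" "2*(r+1)+1 = n+2" "2*r+1 = n" unfolding n_def by simp_all
  show "Phi j (r + 2) - Phi j (r + 1) \<le> Phi j (r + 1) - Phi j r"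
    unfolding Phi_def e using sec cv nn by linarith
next
  show "0 < Phi j 1" using Phi_1[OF j] unfolding Phi_def by simp
next
  show "0 \<le> Phi j ((j - 1) div 2)" using Phi_top[of j] j unfolding Phi_def by simp
qed (use m in auto)


lemma term_id:
  fixes x u :: real
  assumes sx: "sin x > 0"
  shows "bff (2*x) * (cos (u - x) - cos (u + x))
       = 1/2 * (sin u / (sin x)^2) - 1/4 * sin u + 2 * sin x * cos (2*x) * sin u"
proof -
  have c: "cos (u - x) - cos (u + x) = 2 * sin u * sin x" by (simp add: cos_diff cos_add)
  have b: "bff (2*x) = 1 / (8 * sin x) * (2 / (sin x)^2 - 1) + cos (2*x)"
    unfolding bff_def using sx by simp
  show ?thesis unfolding c b using sx
    by (simp add: divide_simps power2_eq_square) (simp add: algebra_simps)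
qed

lemma R_id:
  fixes x :: real and m :: nat
  assumes "m \<ge> 1"
  shows "2 * sin x * cos (2*x) * sin (real (2*m+1) * x)
       = 1/2 * (cos (2 * real (m+1) * x) + cos (2 * real (m-1) * x) - cos (2 * real (m+2) * x) - cos (2 * real m * x))"
proof -
  define v where "v = 2 * real m * x"
  have e1: "2 * real (m+1) * x = v + 2*x" unfolding v_def by (simp add: algebra_simps)
  have e2: "2 * real (m-1) * x = v - 2*x" unfolding v_def using assms by (simp add: of_nat_diff algebra_simps)
  have e3: "2 * real (m+2) * x = v + 4*x" unfolding v_def by (simp add: algebra_simps)
  have e4: "real (2*m+1) * x = v + x" unfolding v_def by (simp add: algebra_simps)
  have h1: "2 * sin x * sin (v + x) = cos v - cos (v + 2*x)"
  proof -
    have "cos v = cos ((v + x) - x)" by simp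
    moreover have "cos (v + 2*x) = cos ((v + x) + x)" by (simp add: algebra_simps)
    ultimately show ?thesis by (simp only: cos_add cos_diff) (simp add: algebra_simps)
  qed
  have h2: "2 * cos (2*x) * cos v = cos (v + 2*x) + cos (v - 2*x)" by (simp add: cos_add cos_diff)
  have h3: "2 * cos (2*x) * cos (v + 2*x) = cos (v + 4*x) + cos v"
  proof -
    have gen: "2*cos y*cos w = cos(w+y) + cos(w-y)" for y w :: real by (simp add: cos_add cos_diff)
    have "v + 2*x + 2*x = v + 4*x" "v + 2*x - 2*x = v" by simp_all
    thus ?thesis using gen[of "2*x" "v+2*x"] by (simp add: add.commute)
  qed
  have "2 * sin x * cos (2*x) * sin (v + x) = 1/2 * (2 * cos (2*x) * (2 * sin x * sin (v+x)))" by simp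
  also have "\<dots> = 1/2 * (2 * cos (2*x) * cos v - 2 * cos (2*x) * cos (v + 2*x))" unfolding h1 by (simp add: algebra_simps)
  also have "\<dots> = 1/2 * (cos (v + 2*x) + cos (v - 2*x) - cos (v + 4*x) - cos v)" unfolding h2 h3 by simp
  finally show ?thesis unfolding e1 e2 e3 e4 v_def[symmetric] .
qed


lemma g1_step:
  assumes l: "2 \<le> l" "2*l+1 \<le> j"
  shows "g1 j l < g1 j (l+1)"
proof -
  define m where "m = l - 1"
  have m1: "m \<ge> 1" and lm: "l = m + 1" using l unfolding m_def by auto
  have j5: "j \<ge> 5" using l by simp
  define n where "n = 2*m+1"
  define x where "x k = real k * pi / real j" for k
  define R where "R k = 2 * sin (x k) * cos (2 * x k) * sin (real n * x k)" for k
  have "g1 j (l+1) - g1 j l = (\<Sum>k=1..j-1. 1/2 * (sin (real n * x k) / (sin (x k))^2) - 1/4 * sin (real n * x k) + R k)"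
    unfolding g1_def sum_subtractf[symmetric]
  proof (rule sum.cong[OF refl])
    fix k assume k: "k \<in> {1..j-1}"
    have sx: "sin (x k) > 0" using sin_k_pos[OF k] x_def by simp
    have e0: "2 * real k * pi / real j = 2 * x k" unfolding x_def by simp
    have e1: "2 * (real (l + 1) - 1) * real k * pi / real j = real n * x k + x k"
      unfolding x_def n_def lm using j5 by (simp add: field_simps)
    have e2: "2 * (real l - 1) * real k * pi / real j = real n * x k - x k"
      unfolding x_def n_def lm using j5 by (simp add: field_simps)
    show "bff (2 * real k * pi / real j) * (1 - cos (2 * (real (l + 1) - 1) * real k * pi / real j)) -
          bff (2 * real k * pi / real j) * (1 - cos (2 * (real l - 1) * real k * pi / real j)) =
          1/2 * (sin (real n * x k) / (sin (x k))^2) - 1/4 * sin (real n * x k) + R k"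
      unfolding e0 e1 e2 R_def using term_id[OF sx, of "real n * x k"] by (simp add: algebra_simps)
  qed
  also have "\<dots> = 1/2 * AA j n - 1/4 * tt j n + (\<Sum>k=1..j-1. R k)"
  proof -
    have "(\<Sum>k=1..j-1. sin (real n * x k)) = tt j n"
      using sin_sum_odd[of j n] j5 l lm unfolding tt_def x_def n_def by simp
    moreover have "AA j n = (\<Sum>k=1..j-1. sin (real n * x k) / (sin (x k))^2)" unfolding AA_def x_def by simp
    ultimately show ?thesis by (simp add: sum.distrib sum_subtractf sum_distrib_left sum_divide_distrib[symmetric])
  qed
  finally have D: "g1 j (l+1) - g1 j l = 1/2 * AA j n - 1/4 * tt j n + (\<Sum>k=1..j-1. R k)" .
  have RR: "(\<Sum>k=1..j-1. R k) = 1/2 * ((\<Sum>k=1..j-1. cos (2 * real (m+1) * x k)) + (\<Sum>k=1..j-1. cos (2 * real (m-1) * x k))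
        - (\<Sum>k=1..j-1. cos (2 * real (m+2) * x k)) - (\<Sum>k=1..j-1. cos (2 * real m * x k)))"
    unfolding R_def n_def R_id[OF m1] by (simp only: sum_subtractf[symmetric] sum.distrib[symmetric] sum_distrib_left)
  have "1/2 * ((\<Sum>k=1..j-1. cos (2 * real (m+1) * x k)) + (\<Sum>k=1..j-1. cos (2 * real (m-1) * x k))
        - (\<Sum>k=1..j-1. cos (2 * real (m+2) * x k)) - (\<Sum>k=1..j-1. cos (2 * real m * x k))) \<ge> 0"
  proof -
    have "(\<Sum>k=1..j-1. cos (2 * real (m+1) * x k)) = -1" unfolding x_def
      by (rule cos_sum) (use l lm in auto)
    moreover have "(\<Sum>k=1..j-1. cos (2 * real (m+2) * x k)) = -1" unfolding x_def
      by (rule cos_sum) (use l lm in auto)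
    moreover have "(\<Sum>k=1..j-1. cos (2 * real m * x k)) = -1" unfolding x_def
      by (rule cos_sum) (use l lm in auto)
    moreover have "(\<Sum>k=1..j-1. cos (2 * real (m-1) * x k)) \<ge> -1" unfolding x_def
      by (rule cos_sum_ge) (use l lm in auto)
    ultimately show ?thesis by simp
  qed
  hence "g1 j (l+1) - g1 j l \<ge> 1/2 * AA j n - 1/4 * tt j n" using D RR by linarith
  moreover have "Phi j m > 0"
    by (rule Phi_pos[OF j5 m1]) (use l lm in presburger)
  ultimately show ?thesis unfolding Phi_def n_def by simp
qed


theorem proposition4p1:
  fixes j :: nat
  assumes "j \<ge> 3"
  shows "strict_mono_on {l::nat. 2 \<le> l \<and> int l \<le> \<lfloor>(real j + 1) / 2\<rfloor>} (\<lambda>l. g1 j l)"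
proof (rule strict_mono_onI)
  fix r s assume r: "r \<in> {l::nat. 2 \<le> l \<and> int l \<le> \<lfloor>(real j + 1) / 2\<rfloor>}"
    and s: "s \<in> {l::nat. 2 \<le> l \<and> int l \<le> \<lfloor>(real j + 1) / 2\<rfloor>}" and rs: "r < s"
  have r2: "2 \<le> r" using r by simp
  have "int s \<le> \<lfloor>(real j + 1) / 2\<rfloor>" using s by simp
  hence "real_of_int (int s) \<le> (real j + 1) / 2" by (simp only: le_floor_iff)
  hence "real s \<le> (real j + 1) / 2" by simp
  hence "real (2 * s) \<le> real (j + 1)" by simp
  hence s2: "2 * s \<le> j + 1" by (simp only: of_nat_le_iff)
  have "\<forall>s'. Suc r \<le> s' \<longrightarrow> s' \<le> s \<longrightarrow> g1 j r < g1 j s'"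
  proof (intro allI impI)
    fix s' assume a: "Suc r \<le> s'" "s' \<le> s"
    thus "g1 j r < g1 j s'"
    proof (induction s' rule: dec_induct)
      case base
      show ?case using g1_step[of r j] r2 rs s2 by simp
    next
      case (step q)
      have "g1 j q < g1 j (q+1)" by (rule g1_step) (use step r2 s2 in auto)
      thus ?case using step by simp
    qed
  qed
  thus "g1 j r < g1 j s" using rs by auto
qed

end
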